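(* Let $n,k,b,t$ be positive integers with $k\le n$, let $V=\{1,\dots,n\}$, and let $Q_1,\dots,Q_t$ be arbitrary subsets of $V\times\{1,\dots,b\}$; for $1\le i\le t$ and $1\le\beta\le b$ put $Q_{i,\beta}=\{x\in V:(x,\beta)\in Q_i\}$. Let $\mathcal F_k^n$ be the family of all $k$-element subsets of $V$. Suppose that $k/2$ is a prime power and that $t\le \frac{k}{2b}\lg\frac{n}{k}-\frac{k+1}{b}$, where $\lg$ is the binary logarithm. Then there exist two sets $A,B\in\mathcal F_k^n$ such that (a) $|A\cap B|=k/2$, and (b) for every $1\le\beta\le b$ and $1\le i\le t$, $|A\cap Q_{i,\beta}|$ is odd if and only if $|B\cap Q_{i,\beta}|$ is odd.
   Context: Each $Q_i$ (a "query") is interpreted as the set of pairs (station $x$, channel $\beta$) such that station $x$ transmits on channel $\beta$ at time step $i$; a deterministic oblivious algorithm is represented by such a sequence $Q_1,\dots,Q_t$. *)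

theory Defs
  imports Complex_Main "HOL-Computational_Algebra.Primes"
begin

definition query_channel :: "nat \<Rightarrow> (nat \<Rightarrow> (nat \<times> nat) set) \<Rightarrow> nat \<Rightarrow> nat \<Rightarrow> nat set" where
  "query_channel n Q i \<beta> = {x \<in> {1..n}. (x, \<beta>) \<in> Q i}"

end

theory Submission imports Defs "Jordan_Normal_Form.Determinant" begin


lemma pp_dvd_choose:
  assumes p: "prime (p::nat)" and l: "0 < l" "l < p ^ m"
  shows "p dvd (p ^ m choose l)"
proof (rule ccontr)
  assume nd: "\<not> p dvd (p ^ m choose l)"
  have "l * (p ^ m choose l) = p ^ m * ((p ^ m - 1) choose (l - 1))"
    using times_binomial_minus1_eq[OF l(1)] by simp
  hence "p ^ m dvd l * (p ^ m choose l)" by simp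
  moreover have "coprime (p ^ m) (p ^ m choose l)"
    using nd p by (simp add: prime_imp_coprime)
  ultimately have "p ^ m dvd l" using coprime_dvd_mult_left_iff by blast
  thus False using l by (simp add: nat_dvd_not_less)
qed

lemma choose_shift_mod:
  assumes p: "prime (p::nat)" and q: "q = p ^ m"
  shows "(q + y choose (q - 1)) mod p = (y choose (q - 1)) mod p"
proof -
  have qpos: "q \<ge> 1" using q p by (simp add: prime_gt_0_nat Suc_le_eq)
  let ?g = "\<lambda>l. (q choose l) * (y choose (q - 1 - l))"
  have "(q + y) choose (q - 1) = (\<Sum>l\<le>q-1. ?g l)" using vandermonde[where r="q-1" and m=q and n=y] by simp
  also have "{..q-1} = insert 0 {1..q-1}" by auto
  also have "(\<Sum>l\<in>insert 0 {1..q-1}. ?g l) = ?g 0 + (\<Sum>l\<in>{1..q-1}. ?g l)" by (subst sum.insert) auto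
  finally have eq: "(q + y) choose (q - 1) = (y choose (q - 1)) + (\<Sum>l\<in>{1..q-1}. ?g l)" by simp
  have "p dvd (\<Sum>l\<in>{1..q-1}. ?g l)"
  proof (rule dvd_sum)
    fix l assume "l \<in> {1..q-1}"
    hence l0: "0 < l" and l1: "l < p ^ m" using q qpos by auto
    have "p dvd (q choose l)" unfolding q by (rule pp_dvd_choose[OF p l0 l1])
    thus "p dvd ?g l" by (rule dvd_mult2)
  qed
  then obtain c where c: "(\<Sum>l\<in>{1..q-1}. ?g l) = p * c" by (elim dvdE)
  show ?thesis unfolding eq c by simp
qed

lemma choose_mid_dvd:
  assumes p: "prime (p::nat)" and q: "q = p ^ m" and i: "q < i" "i < 2 * q"
  shows "p dvd ((i - 1) choose (q - 1))"
proof -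
  have "i - 1 = q + (i - 1 - q)" using i by simp
  hence "((i - 1) choose (q - 1)) mod p = ((i - 1 - q) choose (q - 1)) mod p"
    using choose_shift_mod[OF p q, of "i - 1 - q"] by simp
  also have "(i - 1 - q) choose (q - 1) = 0" using i by simp
  finally show ?thesis by (simp add: dvd_eq_mod_eq_0)
qed

lemma choose_top_ndvd:
  assumes p: "prime (p::nat)" and q: "q = p ^ m"
  shows "\<not> p dvd ((2 * q - 1) choose (q - 1))"
proof -
  have qpos: "q \<ge> 1" using q p by (simp add: prime_gt_0_nat Suc_le_eq)
  have "2 * q - 1 = q + (q - 1)" using qpos by simp
  hence "((2 * q - 1) choose (q - 1)) mod p = ((q - 1) choose (q - 1)) mod p"
    using choose_shift_mod[OF p q, of "q - 1"] by simp
  also have "\<dots> = 1" using prime_gt_1_nat[OF p] by simp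
  finally show ?thesis by (simp add: dvd_eq_mod_eq_0)
qed

lemma alt_sum:
  assumes "1 \<le> i"
  shows "(\<Sum>j<Suc q. (-1::int) ^ (q - j) * int (i choose j)) = int ((i - 1) choose q)"
proof (induction q)
  case 0 then show ?case by simp
next
  case (Suc q)
  have "(\<Sum>j<Suc (Suc q). (-1::int) ^ (Suc q - j) * int (i choose j))
      = (\<Sum>j<Suc q. (-1::int) ^ (Suc q - j) * int (i choose j)) + int (i choose Suc q)" by simp
  also have "(\<Sum>j<Suc q. (-1::int) ^ (Suc q - j) * int (i choose j))
      = (\<Sum>j<Suc q. - ((-1::int) ^ (q - j) * int (i choose j)))"
  proof (rule sum.cong)
    fix j assume "j \<in> {..<Suc q}"
    hence "Suc q - j = Suc (q - j)" by auto
    thus "(-1::int) ^ (Suc q - j) * int (i choose j) = - ((-1::int) ^ (q - j) * int (i choose j))" by simp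
  qed simp
  also have "\<dots> = - (\<Sum>j<Suc q. (-1::int) ^ (q - j) * int (i choose j))"
    by (rule sum_negf)
  also have "\<dots> = - int ((i - 1) choose q)" using Suc by simp
  finally have e: "(\<Sum>j<Suc (Suc q). (-1::int) ^ (Suc q - j) * int (i choose j)) = - int ((i - 1) choose q) + int (i choose Suc q)" .
  have "i choose Suc q = ((i - 1) choose q) + ((i - 1) choose Suc q)"
    using choose_reduce_nat[of i "Suc q"] assms by simp
  hence "int (i choose Suc q) = int ((i - 1) choose q) + int ((i - 1) choose Suc q)" by (simp only: of_nat_add)
  thus ?case using e by linarith
qed



lemma binom_step_nat: "Suc i * (n choose Suc i) = (n - i) * (n choose i)"
  using binomial_absorption[of i n] binomial_absorb_comp[of n i] by simp

lemma sum_binom_le: "3 * m \<le> n \<Longrightarrow> (\<Sum>j<Suc m. n choose j) \<le> 2 * (n choose m)"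
proof (induction m)
  case 0 then show ?case by simp
next
  case (Suc m)
  have ih: "(\<Sum>j<Suc m. n choose j) \<le> 2 * (n choose m)" using Suc by simp
  have "2 * Suc m \<le> n - m" using Suc.prems by simp
  hence "(2 * Suc m) * (n choose m) \<le> (n - m) * (n choose m)" by (rule mult_right_mono) simp
  hence "Suc m * (2 * (n choose m)) \<le> (n - m) * (n choose m)" by (simp only: mult.assoc mult.left_commute)
  also have "\<dots> = Suc m * (n choose Suc m)" by (rule binom_step_nat[symmetric])
  finally have "2 * (n choose m) \<le> n choose Suc m" using mult_le_cancel1[of "Suc m" "2 * (n choose m)" "n choose Suc m"] by (simp del: mult_Suc)
  thus ?case using ih by simp
qed

lemma binom_grow:
  assumes n: "2 * q \<le> n" and q: "1 \<le> q"
  shows "j \<le> q + 1 \<Longrightarrow> ((real n - 2 * q) / (2 * q)) ^ j * real (n choose (q - 1)) \<le> real (n choose (q - 1 + j))"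
proof (induction j)
  case 0 then show ?case by simp
next
  case (Suc j)
  let ?\<rho> = "(real n - 2 * q) / (2 * q)"
  let ?i = "q - 1 + j"
  have i1: "Suc ?i \<le> 2 * q" using Suc.prems q by simp
  have i2: "?i < n" using i1 n by simp
  have rho0: "0 \<le> ?\<rho>" using n by simp
  have ih: "?\<rho> ^ j * real (n choose (q - 1)) \<le> real (n choose ?i)" using Suc by simp
  have eq: "real (n choose Suc ?i) * real (Suc ?i) = real (n choose ?i) * real (n - ?i)"
    using binom_step_nat[of ?i n] by (metis of_nat_mult mult.commute)
  have "?\<rho> * real (Suc ?i) \<le> real (n - ?i)"
  proof -
    have "?\<rho> * real (Suc ?i) \<le> ?\<rho> * (2 * q)" using rho0 i1 by (intro mult_left_mono) auto
    also have "\<dots> = real n - 2 * q" using q by simp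
    also have "\<dots> \<le> real (n - ?i)" using i1 i2 by (simp add: of_nat_diff)
    finally show ?thesis .
  qed
  hence "real (n choose ?i) * (?\<rho> * real (Suc ?i)) \<le> real (n choose Suc ?i) * real (Suc ?i)"
    unfolding eq by (intro mult_left_mono) auto
  hence "(real (n choose ?i) * ?\<rho>) * real (Suc ?i) \<le> real (n choose Suc ?i) * real (Suc ?i)" by (simp only: mult.assoc)
  hence "real (n choose ?i) * ?\<rho> \<le> real (n choose Suc ?i)" by (rule mult_right_le_imp_le) simp
  moreover have "?\<rho> ^ Suc j * real (n choose (q - 1)) \<le> real (n choose ?i) * ?\<rho>"
  proof -
    have "?\<rho> ^ Suc j * real (n choose (q - 1)) = (?\<rho> ^ j * real (n choose (q - 1))) * ?\<rho>"
      by (simp only: power_Suc2 mult_ac)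
    also have "\<dots> \<le> real (n choose ?i) * ?\<rho>" by (rule mult_right_mono[OF ih rho0])
    finally show ?thesis .
  qed
  ultimately show ?case by (simp add: add_Suc_right)
qed

lemma numeric:
  fixes n k b t q :: nat
  assumes b: "0 < b" and t: "0 < t" and q: "1 \<le> q" and k: "k = 2 * q" and kn: "k \<le> n"
    and hyp: "real t \<le> real k / (2 * real b) * log 2 (real n / real k) - (real k + 1) / real b"
  shows "2 ^ (b * t) * (\<Sum>j<q. n choose j) < (n - 1) choose (k - 1)"
proof -
  define r where "r = real n / real k"
  define L where "L = log 2 r"
  have k0: "real k > 0" using k q by simp
  have n0: "real n > 0" using kn k q by simp
  have r0: "r > 0" unfolding r_def using k0 n0 by simp
  have h1: "real b * real t \<le> real q * L - (2 * real q + 1)"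
  proof -
    have "real b * real t \<le> real b * (real k / (2 * real b) * L - (real k + 1) / real b)"
      using hyp b unfolding L_def r_def by (intro mult_left_mono) auto
    also have "\<dots> = real q * L - (2 * real q + 1)" using b k by (simp add: field_simps)
    finally show ?thesis .
  qed
  have h2: "real (2 ^ (b * t)) \<le> r ^ q / 2 ^ (2 * q + 1)"
  proof -
    have "real (2 ^ (b * t)) = 2 powr (real b * real t)"
      by (simp add: powr_realpow[symmetric])
    also have "\<dots> \<le> 2 powr (real q * L - (2 * real q + 1))" using h1 by (intro powr_mono) auto
    also have "\<dots> = 2 powr (L * real q) / 2 powr (2 * real q + 1)" by (simp add: powr_diff mult.commute)
    also have "2 powr (L * real q) = (2 powr L) powr real q" by (simp add: powr_powr)
    also have "2 powr L = r" unfolding L_def using r0 by simp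
    also have "r powr real q = r ^ q" using r0 by (simp add: powr_realpow)
    also have "(2::real) powr (2 * real q + 1) = 2 ^ (2 * q + 1)"
      using powr_realpow[of 2 "2 * q + 1"] by (simp add: add.commute)
    finally show ?thesis .
  qed
  have L2: "L > 2"
  proof -
    have "1 \<le> b * t" using b t by (simp add: Suc_le_eq)
    hence "1 \<le> real b * real t" by (metis of_nat_1 of_nat_le_iff of_nat_mult)
    hence "real q * 2 < real q * L" using h1 by linarith
    thus ?thesis using q by simp
  qed
  have r4: "r > 4"
  proof -
    have "2 powr 2 < r" using L2 less_log_iff[of 2 r 2] r0 unfolding L_def by simp
    thus ?thesis by simp
  qed
  have nr: "real n = 2 * real q * r" unfolding r_def using k k0 by simp
  have n8: "real n > 8 * real q" using nr r4 q by simp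
  define B where "B = real (n choose (q - 1))"
  have B0: "B > 0" unfolding B_def using n8 by simp
  have S: "real (\<Sum>j<q. n choose j) \<le> 2 * B"
  proof -
    have "3 * (q - 1) \<le> n" using n8 by linarith
    hence "(\<Sum>j<Suc (q - 1). n choose j) \<le> 2 * (n choose (q - 1))" by (rule sum_binom_le)
    hence "(\<Sum>j<q. n choose j) \<le> 2 * (n choose (q - 1))" using q by simp
    thus ?thesis unfolding B_def by (metis of_nat_le_iff of_nat_mult of_nat_numeral)
  qed
  have C: "(r - 1) ^ (q + 1) * B \<le> real (n choose (2 * q))"
  proof -
    have e1: "((real n - 2 * q) / (2 * q)) ^ (q + 1) * real (n choose (q - 1)) \<le> real (n choose (q - 1 + (q + 1)))"
      by (rule binom_grow) (use n8 q in auto)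
    have e2: "(real n - 2 * q) / (2 * q) = r - 1" using nr q by (simp add: field_simps)
    have e3: "q - 1 + (q + 1) = 2 * q" using q by simp
    from e1 show ?thesis unfolding B_def e2 e3 .
  qed
  have D: "real ((n - 1) choose (k - 1)) * r = real (n choose (2 * q))"
  proof -
    have "k * (n choose k) = n * ((n - 1) choose (k - 1))" using times_binomial_minus1_eq[of k n] k q by simp
    hence "real k * real (n choose k) = real n * real ((n - 1) choose (k - 1))" by (metis of_nat_mult)
    thus ?thesis unfolding r_def using k0 k by (simp add: field_simps)
  qed
  have key: "r ^ (q + 1) < 4 ^ q * (r - 1) ^ (q + 1)"
  proof -
    have "r ^ (q + 1) < (2 * (r - 1)) ^ (q + 1)" using r4 by (intro power_strict_mono) auto
    also have "\<dots> = 2 ^ (q + 1) * (r - 1) ^ (q + 1)" by (rule power_mult_distrib)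
    also have "(2::real) ^ (q + 1) \<le> 4 ^ q"
    proof -
      have "(2::real) ^ (q + 1) \<le> 2 ^ (2 * q)" using q by (intro power_increasing) auto
      also have "\<dots> = 4 ^ q" by (simp add: power_mult)
      finally show ?thesis .
    qed
    hence "2 ^ (q + 1) * (r - 1) ^ (q + 1) \<le> 4 ^ q * (r - 1) ^ (q + 1)" using r4 by (intro mult_right_mono) auto
    finally show ?thesis .
  qed
  have rq0: "0 \<le> r ^ q / 2 ^ (2 * q + 1)" using r0 by simp
  have "real (2 ^ (b * t) * (\<Sum>j<q. n choose j)) \<le> r ^ q / 2 ^ (2 * q + 1) * (2 * B)"
    using h2 S rq0 by (simp only: of_nat_mult) (intro mult_mono, auto simp: B0 r0 sum_nonneg less_imp_le)
  also have "\<dots> = r ^ q * B / 4 ^ q" by (simp add: power_add power_mult)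
  also have "\<dots> < (r - 1) ^ (q + 1) * B / r"
  proof -
    have "r ^ (q + 1) * B < 4 ^ q * (r - 1) ^ (q + 1) * B" using key B0 by simp
    hence "r ^ q * B * r < (r - 1) ^ (q + 1) * B * 4 ^ q" by (simp add: algebra_simps)
    thus ?thesis using r0 by (simp add: field_simps)
  qed
  also have "\<dots> \<le> real (n choose (2 * q)) / r" using C r0 by (simp add: divide_right_mono)
  also have "\<dots> = real ((n - 1) choose (k - 1))" using D r0 by (simp add: field_simps)
  finally show ?thesis by (simp only: of_nat_less_iff)
qed



lemma sum_subsets_by_card:
  assumes "finite X"
  shows "(\<Sum>S\<in>{S. S \<subseteq> X \<and> card S < q}. (\<phi> (card S) :: int)) = (\<Sum>j<q. int (card X choose j) * \<phi> j)"
proof (induction q)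
  case 0 then show ?case by simp
next
  case (Suc q)
  have fin: "finite {S. S \<subseteq> X \<and> card S < q}" "finite {S. S \<subseteq> X \<and> card S = q}" using assms by auto
  have "{S. S \<subseteq> X \<and> card S < Suc q} = {S. S \<subseteq> X \<and> card S < q} \<union> {S. S \<subseteq> X \<and> card S = q}" by auto
  hence "(\<Sum>S\<in>{S. S \<subseteq> X \<and> card S < Suc q}. \<phi> (card S)) =
     (\<Sum>S\<in>{S. S \<subseteq> X \<and> card S < q}. \<phi> (card S)) + (\<Sum>S\<in>{S. S \<subseteq> X \<and> card S = q}. \<phi> (card S))"
    using fin by (simp add: sum.union_disjoint disjoint_iff)
  also have "(\<Sum>S\<in>{S. S \<subseteq> X \<and> card S = q}. \<phi> (card S)) = (\<Sum>S\<in>{S. S \<subseteq> X \<and> card S = q}. \<phi> q)"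
    by (rule sum.cong) auto
  also have "\<dots> = int (card {S. S \<subseteq> X \<and> card S = q}) * \<phi> q" by (simp only: sum_constant of_nat_id mult.commute)
  also have "card {S. S \<subseteq> X \<and> card S = q} = card X choose q" by (rule n_subsets[OF assms])
  finally show ?case by (simp only: Suc.IH sum.lessThan_Suc)
qed

lemma fw:
  fixes F :: "nat set set"
  assumes p: "prime p" and q: "q = p ^ m"
    and fin: "finite F"
    and FA: "\<And>A. A \<in> F \<Longrightarrow> A \<subseteq> {1..n} \<and> card A = 2 * q \<and> 1 \<in> A"
    and noq: "\<And>A B. A \<in> F \<Longrightarrow> B \<in> F \<Longrightarrow> A \<noteq> B \<Longrightarrow> card (A \<inter> B) \<noteq> q"
  shows "card F \<le> card {S. S \<subseteq> {1..n} \<and> card S < q}"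
proof (rule ccontr)
  define Sm where "Sm = {S. S \<subseteq> {1..n} \<and> card S < q}"
  define f where "f = card F"
  define s where "s = card Sm"
  assume "\<not> card F \<le> card {S. S \<subseteq> {1..n} \<and> card S < q}"
  hence sf: "s < f" unfolding s_def f_def Sm_def by simp
  have finSm: "finite Sm" unfolding Sm_def by (rule finite_subset[of _ "Pow {1..n}"]) auto
  obtain g where g: "bij_betw g {0..<f} F" using ex_bij_betw_nat_finite[OF fin] f_def by auto
  obtain h where h: "bij_betw h {0..<s} Sm" using ex_bij_betw_nat_finite[OF finSm] s_def by auto
  have qpos: "q \<ge> 1" using q p by (simp add: prime_gt_0_nat Suc_le_eq)
  have gA: "\<And>a. a < f \<Longrightarrow> g a \<in> F" using g by (auto dest: bij_betwE)
  have ginj: "\<And>a b. a < f \<Longrightarrow> b < f \<Longrightarrow> g a = g b \<Longrightarrow> a = b"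
    using g unfolding bij_betw_def inj_on_def by auto
  define L :: "int mat" where "L = mat f f (\<lambda>(a,j). if j < s \<and> h j \<subseteq> g a then (-1)^(q - 1 - card (h j)) else 0)"
  define R :: "int mat" where "R = mat f f (\<lambda>(j,b). if j < s \<and> h j \<subseteq> g b then 1 else 0)"
  define M where "M = L * R"
  have Lc: "L \<in> carrier_mat f f" unfolding L_def by simp
  have Rc: "R \<in> carrier_mat f f" unfolding R_def by simp
  have Mc: "M \<in> carrier_mat f f" unfolding M_def using Lc Rc by simp
  have entry: "M $$ (a,b) = int ((card (g a \<inter> g b) - 1) choose (q - 1))" if a: "a < f" and b: "b < f" for a b
  proof -
    let ?X = "g a \<inter> g b"
    have Xs: "?X \<subseteq> {1..n}" using FA[OF gA[OF a]] by auto
    have Xf: "finite ?X" using Xs finite_subset by blast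
    have X1: "1 \<in> ?X" using FA[OF gA[OF a]] FA[OF gA[OF b]] by auto
    have Xc: "1 \<le> card ?X" using Xf X1 card_gt_0_iff[of ?X] by auto
    have "M $$ (a,b) = (\<Sum>j\<in>{0..<f}. L $$ (a,j) * R $$ (j,b))"
      unfolding M_def using Lc Rc a b by (simp add: scalar_prod_def)
    also have "\<dots> = (\<Sum>j\<in>{0..<f}. if j < s \<and> h j \<subseteq> ?X then (-1::int)^(q - 1 - card (h j)) else 0)"
      by (rule sum.cong) (auto simp: L_def R_def a b)
    also have "\<dots> = (\<Sum>j\<in>{0..<s}. if j < s \<and> h j \<subseteq> ?X then (-1::int)^(q - 1 - card (h j)) else 0)"
      by (rule sum.mono_neutral_right) (use sf in auto)
    also have "\<dots> = (\<Sum>j\<in>{0..<s}. if h j \<subseteq> ?X then (-1::int)^(q - 1 - card (h j)) else 0)"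
      by (rule sum.cong) auto
    also have "\<dots> = (\<Sum>S\<in>Sm. if S \<subseteq> ?X then (-1::int)^(q - 1 - card S) else 0)"
      by (rule sum.reindex_bij_betw[OF h])
    also have "\<dots> = (\<Sum>S\<in>{S\<in>Sm. S \<subseteq> ?X}. (-1::int)^(q - 1 - card S))"
      by (rule sum.inter_filter[symmetric, OF finSm])
    also have "{S\<in>Sm. S \<subseteq> ?X} = {S. S \<subseteq> ?X \<and> card S < q}" unfolding Sm_def using Xs by auto
    also have "(\<Sum>S\<in>{S. S \<subseteq> ?X \<and> card S < q}. (-1::int)^(q - 1 - card S)) = (\<Sum>j<q. int (card ?X choose j) * (-1)^(q-1-j))"
      by (rule sum_subsets_by_card[OF Xf])
    also have "\<dots> = (\<Sum>j<Suc (q-1). (-1::int)^(q-1-j) * int (card ?X choose j))"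
      using qpos by (simp add: mult.commute)
    also have "\<dots> = int ((card ?X - 1) choose (q - 1))" by (rule alt_sum[OF Xc])
    finally show ?thesis .
  qed
  have "det L = 0"
  proof -
    have "signof \<pi> * (\<Prod>i = 0..<f. L $$ (i, \<pi> i)) = 0" if pi: "\<pi> permutes {0..<f}" for \<pi>
    proof -
      have "f - 1 \<in> \<pi> ` {0..<f}" using permutes_image[OF pi] sf by auto
      then obtain i where i: "i < f" "\<pi> i = f - 1" by auto
      have ns: "\<not> f - 1 < s" using sf by simp
      have "L $$ (i, \<pi> i) = 0" using i ns unfolding L_def by simp
      hence "(\<Prod>i = 0..<f. L $$ (i, \<pi> i)) = 0" using i by (intro prod_zero) (auto intro!: bexI[of _ i])
      thus ?thesis by simp
    qed
    thus ?thesis unfolding det_def'[OF Lc] by (simp add: sum.neutral)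
  qed
  hence detM: "det M = 0" unfolding M_def using det_mult[OF Lc Rc] by simp
  have pint: "prime (int p)" using p by (metis nat_int prime_nat_iff_prime)
  have offd: "int p dvd M $$ (a,b)" if a: "a < f" and b: "b < f" and ab: "a \<noteq> b" for a b
  proof -
    let ?A = "g a" and ?B = "g b"
    have AB: "?A \<noteq> ?B" using ginj a b ab by blast
    have Af: "finite ?A" "card ?A = 2 * q" using FA[OF gA[OF a]] finite_subset by auto
    have Bf: "finite ?B" "card ?B = 2 * q" using FA[OF gA[OF b]] finite_subset by auto
    have c1: "1 \<le> card (?A \<inter> ?B)" using FA[OF gA[OF a]] FA[OF gA[OF b]] Af card_gt_0_iff[of "?A \<inter> ?B"] by auto
    have c2: "card (?A \<inter> ?B) < 2 * q"
    proof (rule ccontr)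
      assume "\<not> card (?A \<inter> ?B) < 2 * q"
      hence "card (?A \<inter> ?B) \<ge> card ?A" using Af by simp
      hence "?A \<inter> ?B = ?A" using card_subset_eq[OF Af(1), of "?A \<inter> ?B"] card_mono[OF Af(1), of "?A \<inter> ?B"] by auto
      hence "?A \<subseteq> ?B" by auto
      hence "?A = ?B" using card_subset_eq[OF Bf(1)] Af Bf by metis
      thus False using AB by simp
    qed
    have c3: "card (?A \<inter> ?B) \<noteq> q" using noq[OF gA[OF a] gA[OF b] AB] .
    have "p dvd ((card (?A \<inter> ?B) - 1) choose (q - 1))"
    proof (cases "card (?A \<inter> ?B) < q")
      case True
      hence "card (?A \<inter> ?B) - 1 < q - 1" using c1 by linarith
      hence "(card (?A \<inter> ?B) - 1) choose (q - 1) = 0" by (rule binomial_eq_0)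
      thus ?thesis by (simp del: binomial_eq_0_iff)
    next
      case False thus ?thesis using choose_mid_dvd[OF p q, of "card (?A \<inter> ?B)"] c2 c3 by simp
    qed
    thus ?thesis using entry[OF a b] by simp
  qed
  have diag: "\<not> int p dvd M $$ (a,a)" if a: "a < f" for a
  proof -
    have "card (g a \<inter> g a) = 2 * q" using FA[OF gA[OF a]] by simp
    thus ?thesis using entry[OF a a] choose_top_ndvd[OF p q] by simp
  qed
  define P where "P = {\<pi>. \<pi> permutes {0..<f}}"
  have Pf: "finite P" unfolding P_def by (rule finite_permutations) simp
  have idP: "id \<in> P" unfolding P_def by (simp add: permutes_id)
  have "det M = (\<Sum>\<pi>\<in>P. signof \<pi> * (\<Prod>i = 0..<f. M $$ (i, \<pi> i)))" unfolding det_def'[OF Mc] P_def ..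
  also have "\<dots> = signof id * (\<Prod>i = 0..<f. M $$ (i, id i)) + (\<Sum>\<pi>\<in>P - {id}. signof \<pi> * (\<Prod>i = 0..<f. M $$ (i, \<pi> i)))"
    by (rule sum.remove[OF Pf idP])
  finally have detM2: "det M = (\<Prod>i = 0..<f. M $$ (i, i)) + (\<Sum>\<pi>\<in>P - {id}. signof \<pi> * (\<Prod>i = 0..<f. M $$ (i, \<pi> i)))"
    by simp
  have "int p dvd (\<Sum>\<pi>\<in>P - {id}. signof \<pi> * (\<Prod>i = 0..<f. M $$ (i, \<pi> i)))"
  proof (rule dvd_sum)
    fix \<pi> assume pi: "\<pi> \<in> P - {id}"
    have perm: "\<pi> permutes {0..<f}" using pi P_def by simp
    have "\<exists>i<f. \<pi> i \<noteq> i"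
    proof (rule ccontr)
      assume "\<not> (\<exists>i<f. \<pi> i \<noteq> i)"
      hence "\<pi> x = x" for x using permutes_not_in[OF perm, of x] by (cases "x < f") auto
      hence "\<pi> = id" by auto
      thus False using pi by simp
    qed
    then obtain i where i: "i < f" "\<pi> i \<noteq> i" by auto
    have "\<pi> i < f" using permutes_in_image[OF perm] i by simp
    hence "int p dvd M $$ (i, \<pi> i)" using offd i by auto
    moreover have "M $$ (i, \<pi> i) dvd (\<Prod>i = 0..<f. M $$ (i, \<pi> i))" using i by (intro dvd_prodI) auto
    ultimately have "int p dvd (\<Prod>i = 0..<f. M $$ (i, \<pi> i))" by (rule dvd_trans)
    thus "int p dvd signof \<pi> * (\<Prod>i = 0..<f. M $$ (i, \<pi> i))" by (rule dvd_mult)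
  qed
  moreover have "\<not> int p dvd (\<Prod>i = 0..<f. M $$ (i, i))"
    using diag by (simp add: prime_dvd_prod_iff[OF _ pint])
  ultimately have "\<not> int p dvd det M" unfolding detM2 using dvd_add_left_iff by blast
  thus False using detM by simp
qed


theorem lemma2:
  fixes n k b t :: nat and Q :: "nat \<Rightarrow> (nat \<times> nat) set"
  assumes "0 < n" "0 < k" "0 < b" "0 < t" "k \<le> n"
    and "\<forall>i\<in>{1..t}. Q i \<subseteq> {1..n} \<times> {1..b}"
    and "\<exists>p m. prime (p::nat) \<and> 1 \<le> m \<and> k = 2 * p ^ m"
    and "real t \<le> real k / (2 * real b) * log 2 (real n / real k) - (real k + 1) / real b"
  shows "\<exists>A B. A \<subseteq> {1..n} \<and> card A = k \<and> B \<subseteq> {1..n} \<and> card B = k \<and>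
           2 * card (A \<inter> B) = k \<and>
           (\<forall>\<beta>\<in>{1..b}. \<forall>i\<in>{1..t}.
              odd (card (A \<inter> query_channel n Q i \<beta>)) \<longleftrightarrow> odd (card (B \<inter> query_channel n Q i \<beta>)))"
proof (rule ccontr)
  assume neg: "\<not> ?thesis"
  obtain p m where p: "prime p" and m: "1 \<le> m" and kp: "k = 2 * p ^ m" using assms(7) by auto
  define q where "q = p ^ m"
  have q1: "1 \<le> q" unfolding q_def using p by (simp add: prime_gt_0_nat Suc_le_eq)
  have k: "k = 2 * q" using kp q_def by simp
  define Sm where "Sm = {S. S \<subseteq> {1..n} \<and> card S < q}"
  have "int (card Sm) = (\<Sum>S\<in>Sm. (\<lambda>_. 1::int) (card S))" by simp
  also have "\<dots> = (\<Sum>j<q. int (card {1..n} choose j) * 1)" unfolding Sm_def by (rule sum_subsets_by_card) simp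
  also have "\<dots> = int (\<Sum>j<q. n choose j)" by simp
  finally have cardSm: "card Sm = (\<Sum>j<q. n choose j)" by (simp only: of_nat_eq_iff)
  have num: "2 ^ (b * t) * card Sm < (n - 1) choose (k - 1)"
    unfolding cardSm by (rule numeric[OF assms(3) assms(4) q1 k assms(5) assms(8)])
  define D where "D = {1..t} \<times> {1..b}"
  define \<phi> where "\<phi> A = restrict (\<lambda>(i,\<beta>). odd (card (A \<inter> query_channel n Q i \<beta>))) D" for A
  define Y where "Y = PiE D (\<lambda>_. (UNIV::bool set))"
  define G where "G = {A. A \<subseteq> {1..n} \<and> card A = k \<and> 1 \<in> A}"
  have finD: "finite D" unfolding D_def by simp
  have cardY: "card Y = 2 ^ (b * t)"
  proof -
    have "card Y = (\<Prod>x\<in>D. card (UNIV::bool set))" unfolding Y_def by (rule card_PiE[OF finD])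
    also have "\<dots> = 2 ^ card D" by simp
    also have "card D = b * t" unfolding D_def by (simp add: card_cartesian_product)
    finally show ?thesis .
  qed
  have cardG: "card G = (n - 1) choose (k - 1)"
  proof -
    let ?C = "{C. C \<subseteq> {2..n} \<and> card C = k - 1}"
    have eqG: "G = insert 1 ` ?C"
    proof
      show "G \<subseteq> insert 1 ` ?C"
      proof
        fix A assume A: "A \<in> G"
        hence A1: "1 \<in> A" and As: "A \<subseteq> {1..n}" and Ac: "card A = k" unfolding G_def by auto
        have fA: "finite A" using As finite_subset by blast
        have "A - {1} \<in> ?C" using As Ac A1 fA by (auto simp: card_Diff_singleton)
        moreover have "A = insert 1 (A - {1})" using A1 by auto
        ultimately show "A \<in> insert 1 ` ?C" by blast
      qed
    next
      show "insert 1 ` ?C \<subseteq> G"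
      proof
        fix A assume "A \<in> insert 1 ` ?C"
        then obtain C where C: "C \<subseteq> {2..n}" "card C = k - 1" and AC: "A = insert 1 C" by auto
        have "finite C" using C finite_subset by blast
        moreover have "1 \<notin> C" using C by auto
        ultimately have "card A = k" using AC C assms(2) by simp
        moreover have "A \<subseteq> {1..n}" using AC C assms(1) by auto
        ultimately show "A \<in> G" unfolding G_def using AC by simp
      qed
    qed
    have inj: "inj_on (insert 1) ?C"
    proof (rule inj_onI)
      fix C C' assume "C \<in> ?C" "C' \<in> ?C" "insert 1 C = insert 1 C'"
      moreover have "1 \<notin> C" "1 \<notin> C'" using \<open>C \<in> ?C\<close> \<open>C' \<in> ?C\<close> by auto
      ultimately show "C = C'" by (metis Diff_insert_absorb)
    qed
    have "card G = card ?C" unfolding eqG by (rule card_image[OF inj])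
    also have "\<dots> = card {2..n} choose (k - 1)" by (rule n_subsets) simp
    finally show ?thesis by simp
  qed
  define Fy where "Fy y = {A\<in>G. \<phi> A = y}" for y
  have Fy_le: "card (Fy y) \<le> card Sm" for y
    unfolding Sm_def
  proof (rule fw[OF p q_def])
    show "finite (Fy y)" unfolding Fy_def G_def by (rule finite_subset[of _ "Pow {1..n}"]) auto
  next
    fix A assume "A \<in> Fy y"
    thus "A \<subseteq> {1..n} \<and> card A = 2 * q \<and> 1 \<in> A" unfolding Fy_def G_def k by auto
  next
    fix A B assume A: "A \<in> Fy y" and B: "B \<in> Fy y" and AB: "A \<noteq> B"
    show "card (A \<inter> B) \<noteq> q"
    proof
      assume c: "card (A \<inter> B) = q"
      have eq: "\<phi> A = \<phi> B" using A B unfolding Fy_def by simp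
      have par: "\<forall>\<beta>\<in>{1..b}. \<forall>i\<in>{1..t}.
              odd (card (A \<inter> query_channel n Q i \<beta>)) \<longleftrightarrow> odd (card (B \<inter> query_channel n Q i \<beta>))"
      proof (intro ballI)
        fix \<beta> i assume "\<beta> \<in> {1..b}" "i \<in> {1..t}"
        hence "(i, \<beta>) \<in> D" unfolding D_def by simp
        thus "odd (card (A \<inter> query_channel n Q i \<beta>)) \<longleftrightarrow> odd (card (B \<inter> query_channel n Q i \<beta>))"
          using fun_cong[OF eq, of "(i, \<beta>)"] unfolding \<phi>_def by simp
      qed
      have "A \<subseteq> {1..n} \<and> card A = k \<and> B \<subseteq> {1..n} \<and> card B = k \<and> 2 * card (A \<inter> B) = k"
        using A B c k unfolding Fy_def G_def by auto
      thus False using neg par by blast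
    qed
  qed
  have "G \<subseteq> (\<Union>y\<in>Y. Fy y)"
  proof
    fix A assume A: "A \<in> G"
    have "\<phi> A \<in> Y" unfolding Y_def \<phi>_def by (simp add: restrict_PiE_iff)
    thus "A \<in> (\<Union>y\<in>Y. Fy y)" using A unfolding Fy_def by blast
  qed
  hence "card G \<le> card (\<Union>y\<in>Y. Fy y)"
  proof (rule card_mono[rotated])
    have finG: "finite G" unfolding G_def by (rule finite_subset[of _ "Pow {1..n}"]) auto
    show "finite (\<Union>y\<in>Y. Fy y)" by (rule finite_subset[OF _ finG]) (auto simp: Fy_def)
  qed
  also have "\<dots> \<le> (\<Sum>y\<in>Y. card (Fy y))" by (rule card_UN_le) (simp add: Y_def finD finite_PiE)
  also have "\<dots> \<le> card Y * card Sm" using sum_bounded_above[of Y "\<lambda>y. card (Fy y)" "card Sm"] Fy_le by simp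
  finally have "(n - 1) choose (k - 1) \<le> 2 ^ (b * t) * card Sm" using cardG cardY by simp
  thus False using num by simp
qed

end
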